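(* If $\lim_{|x|\to\infty}\int_{-\infty}^{\infty}G(x,t)\,dt=0$, then $$\lim_{N\to\infty}\sup_{x\in\mathbb R}\int_{-\infty}^{-N}G(x,t)\,dt=0\quad\text{and}\quad \lim_{N\to\infty}\sup_{x\in\mathbb R}\int_{N}^{\infty}G(x,t)\,dt=0.$$
   Context: Let $q:\mathbb R\to\mathbb R$ be measurable with $q\in L_1^{\mathrm{loc}}(\mathbb R)$ and $q(x)\ge1$ a.e. A principal fundamental system of solutions (PFSS) of $z''=q(x)z$ is a pair $u,v$ of solutions ($C^1$, derivative locally absolutely continuous, equation a.e.) such that for all $x$: $u>0$, $v>0$, $u'<0$, $v'>0$, $v'u-u'v=1$, $u(x)=v(x)\int_x^\infty v(t)^{-2}dt$, and $u,u'\to0$ as $x\to\infty$, $v,v'\to0$ as $x\to-\infty$, $v,v'\to\infty$ as $x\to\infty$, $u,|u'|\to\infty$ as $x\to-\infty$. Fix a PFSS $\{u,v\}$. The Green function is $G(x,t)=u(x)v(t)$ for $x\ge t$ and $G(x,t)=u(t)v(x)$ for $x\le t$. *)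

theory Defs
  imports "HOL-Analysis.Analysis"
begin

definition admissible_potential :: "(real \<Rightarrow> real) \<Rightarrow> bool" where
  "admissible_potential q \<longleftrightarrow>
     q \<in> borel_measurable lborel \<and>
     (\<forall>a b. set_integrable lborel {a..b} q) \<and>
     (AE x in lborel. q x \<ge> 1)"

text \<open>z is a solution of z'' = q z with derivative z': z is C^1 with derivative z',
  and z' is locally absolutely continuous with z'' = q z a.e., i.e.
  z'(b) - z'(a) is the integral of q z over [a,b].\<close>
definition is_solution :: "(real \<Rightarrow> real) \<Rightarrow> (real \<Rightarrow> real) \<Rightarrow> (real \<Rightarrow> real) \<Rightarrow> bool" where
  "is_solution q z z' \<longleftrightarrow>
     (\<forall>x. (z has_real_derivative z' x) (at x)) \<and>
     continuous_on UNIV z' \<and>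
     (\<forall>a b. a \<le> b \<longrightarrow> ((\<lambda>t. q t * z t) has_integral (z' b - z' a)) {a..b})"

definition PFSS :: "(real \<Rightarrow> real) \<Rightarrow> (real \<Rightarrow> real) \<Rightarrow> (real \<Rightarrow> real) \<Rightarrow>
    (real \<Rightarrow> real) \<Rightarrow> (real \<Rightarrow> real) \<Rightarrow> bool" where
  "PFSS q u u' v v' \<longleftrightarrow>
     is_solution q u u' \<and> is_solution q v v' \<and>
     (\<forall>x. u x > 0 \<and> v x > 0 \<and> u' x < 0 \<and> v' x > 0 \<and>
          v' x * u x - u' x * v x = 1 \<and>
          (\<lambda>t. 1 / (v t)\<^sup>2) integrable_on {x..} \<and>
          u x = v x * integral {x..} (\<lambda>t. 1 / (v t)\<^sup>2)) \<and>
     (u \<longlongrightarrow> 0) at_top \<and> (u' \<longlongrightarrow> 0) at_top \<and>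
     (v \<longlongrightarrow> 0) at_bot \<and> (v' \<longlongrightarrow> 0) at_bot \<and>
     filterlim v at_top at_top \<and> filterlim v' at_top at_top \<and>
     filterlim u at_top at_bot \<and> filterlim (\<lambda>x. \<bar>u' x\<bar>) at_top at_bot"

definition green :: "(real \<Rightarrow> real) \<Rightarrow> (real \<Rightarrow> real) \<Rightarrow> real \<Rightarrow> real \<Rightarrow> real" where
  "green u v x t = (if t \<le> x then u x * v t else u t * v x)"

end

theory Submission
  imports Defs
begin

lemma pfss_mono:
  assumes "PFSS q u u' v v'"
  shows "\<And>a b. a \<le> b \<Longrightarrow> u b \<le> u a" "\<And>a b. a \<le> b \<Longrightarrow> v a \<le> v b"
    "\<And>x. u x > 0" "\<And>x. v x > 0"
proof -
  have du: "\<And>x. (u has_real_derivative u' x) (at x)" and dv: "\<And>x. (v has_real_derivative v' x) (at x)"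
    and s: "\<And>x. u x > 0 \<and> v x > 0 \<and> u' x < 0 \<and> v' x > 0"
    using assms unfolding PFSS_def is_solution_def by blast+
  show "u b \<le> u a" if "a \<le> b" for a b
  proof (cases "a = b")
    case False
    then have "a < b" using that by simp
    from DERIV_neg_imp_decreasing[OF this, of u] du s show ?thesis by force
  qed simp
  show "v a \<le> v b" if "a \<le> b" for a b
  proof (cases "a = b")
    case False
    then have "a < b" using that by simp
    from DERIV_pos_imp_increasing[OF this, of v] dv s show ?thesis by force
  qed simp
  show "\<And>x. u x > 0" "\<And>x. v x > 0" using s by auto
qed

theorem lemma5p3:
  fixes q u u' v v' :: "real \<Rightarrow> real"
  assumes "admissible_potential q"
    and "PFSS q u u' v v'"
    and "((\<lambda>x. \<integral>\<^sup>+ t. ennreal (green u v x t) \<partial>lborel) \<longlongrightarrow> 0) at_infinity"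
  shows "((\<lambda>N::real. SUP x. \<integral>\<^sup>+ t\<in>{..-N}. ennreal (green u v x t) \<partial>lborel) \<longlongrightarrow> 0) at_top
       \<and> ((\<lambda>N::real. SUP x. \<integral>\<^sup>+ t\<in>{N..}. ennreal (green u v x t) \<partial>lborel) \<longlongrightarrow> 0) at_top"
proof -
  note m = pfss_mono[OF assms(2)]
  define I where "I x = (\<integral>\<^sup>+ t. ennreal (green u v x t) \<partial>lborel)" for x
  have sub: "(\<integral>\<^sup>+ t\<in>A. ennreal (green u v x t) \<partial>lborel) \<le> I x" for A x
    unfolding I_def by (intro nn_integral_mono) (auto simp: indicator_def)
  have key: "\<exists>y. \<bar>y\<bar> \<ge> N \<and> (\<integral>\<^sup>+ t\<in>A. ennreal (green u v x t) \<partial>lborel) \<le> I y"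
    if H: "(x < -N \<and> A = {..-N}) \<or> (x \<ge> -N \<and> A = {..-N} \<and> yy = -N) \<or>
        (x > N \<and> A = {N..}) \<or> (x \<le> N \<and> A = {N..} \<and> yy = N)" for N x A yy
  proof -
    consider "x < -N \<and> A = {..-N}" | "x \<ge> -N \<and> A = {..-N} \<and> yy = -N" |
      "x > N \<and> A = {N..}" | "x \<le> N \<and> A = {N..} \<and> yy = N" using H by blast
    then show ?thesis
    proof cases
      case 1 then show ?thesis using sub[where A=A and x=x] by (intro exI[of _ x]) auto
    next
      case 3 then show ?thesis using sub[where A=A and x=x] by (intro exI[of _ x]) auto
    next
      case 2
      have "(\<integral>\<^sup>+ t\<in>A. ennreal (green u v x t) \<partial>lborel) \<le> (\<integral>\<^sup>+ t\<in>A. ennreal (green u v (-N) t) \<partial>lborel)"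
      proof (intro nn_integral_mono)
        fix t
        show "ennreal (green u v x t) * indicator A t \<le> ennreal (green u v (-N) t) * indicator A t"
        proof (cases "t \<in> A")
          case True
          then have "t \<le> -N" "t \<le> x" using 2 by auto
          then have "green u v x t \<le> green u v (-N) t"
            unfolding green_def using m(1)[of "-N" x] m(4)[of t] 2
            by (auto intro: mult_right_mono)
          then show ?thesis using True by (auto intro: ennreal_leI)
        qed simp
      qed
      also have "\<dots> \<le> I (-N)" by (rule sub)
      finally show ?thesis using 2 by (intro exI[of _ "-N"]) auto
    next
      case 4
      have "(\<integral>\<^sup>+ t\<in>A. ennreal (green u v x t) \<partial>lborel) \<le> (\<integral>\<^sup>+ t\<in>A. ennreal (green u v N t) \<partial>lborel)"
      proof (intro nn_integral_mono)
        fix t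
        show "ennreal (green u v x t) * indicator A t \<le> ennreal (green u v N t) * indicator A t"
        proof (cases "t \<in> A")
          case True
          then have "t \<ge> N" "t \<ge> x" using 4 by auto
          then have "green u v x t \<le> green u v N t"
            unfolding green_def using m(2)[of x N] m(3)[of t] 4
            by (auto intro: mult_left_mono)
          then show ?thesis using True by (auto intro: ennreal_leI)
        qed simp
      qed
      also have "\<dots> \<le> I N" by (rule sub)
      finally show ?thesis using 4 by (intro exI[of _ N]) auto
    qed
  qed
  have lim: "((\<lambda>N::real. SUP x. \<integral>\<^sup>+ t\<in>A N. ennreal (green u v x t) \<partial>lborel) \<longlongrightarrow> 0) at_top"
    if A: "\<And>N x. \<exists>y. \<bar>y\<bar> \<ge> N \<and> (\<integral>\<^sup>+ t\<in>A N. ennreal (green u v x t) \<partial>lborel) \<le> I y" for A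
  proof (rule order_tendstoI)
    fix a :: ennreal assume "a < 0" then show "eventually (\<lambda>N. a < (SUP x. \<integral>\<^sup>+ t\<in>A N. ennreal (green u v x t) \<partial>lborel)) at_top"
      by simp
  next
    fix e :: ennreal assume "0 < e"
    then obtain e' where e': "0 < e'" "e' < e" using dense by blast
    have "eventually (\<lambda>x. I x < e') at_infinity"
      using order_tendstoD(2)[OF assms(3)[folded I_def] e'(1)] .
    then obtain b where b: "\<And>x. norm x \<ge> b \<Longrightarrow> I x < e'" unfolding eventually_at_infinity by blast
    show "eventually (\<lambda>N. (SUP x. \<integral>\<^sup>+ t\<in>A N. ennreal (green u v x t) \<partial>lborel) < e) at_top"
      unfolding eventually_at_top_linorder
    proof (intro exI[of _ b] allI impI)
      fix N assume "N \<ge> b"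
      have "(SUP x. \<integral>\<^sup>+ t\<in>A N. ennreal (green u v x t) \<partial>lborel) \<le> e'"
      proof (rule SUP_least)
        fix x
        obtain y where "\<bar>y\<bar> \<ge> N" "(\<integral>\<^sup>+ t\<in>A N. ennreal (green u v x t) \<partial>lborel) \<le> I y"
          using A by blast
        moreover have "I y < e'" using b[of y] \<open>N \<ge> b\<close> \<open>\<bar>y\<bar> \<ge> N\<close> by auto
        ultimately show "(\<integral>\<^sup>+ t\<in>A N. ennreal (green u v x t) \<partial>lborel) \<le> e'" by simp
      qed
      then show "(SUP x. \<integral>\<^sup>+ t\<in>A N. ennreal (green u v x t) \<partial>lborel) < e" using e' by simp
    qed
  qed
  have l1: "\<exists>y. \<bar>y\<bar> \<ge> N \<and> (\<integral>\<^sup>+ t\<in>{..-N}. ennreal (green u v x t) \<partial>lborel) \<le> I y" for N x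
    using key[where N=N and x=x and A="{..-N}" and yy="-N"] by (cases "x < -N") auto
  have l2: "\<exists>y. \<bar>y\<bar> \<ge> N \<and> (\<integral>\<^sup>+ t\<in>{N..}. ennreal (green u v x t) \<partial>lborel) \<le> I y" for N x
    using key[where N=N and x=x and A="{N..}" and yy="N"] by (cases "x > N") auto
  show ?thesis using lim[of "\<lambda>N. {..-N}", OF l1] lim[of "\<lambda>N. {N..}", OF l2] by simp
qed

end
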